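(* A system $C=(1,c_2,c_3,c_4,c_5,2c_5-c_2)$ is canonical and its subsystem $(1,c_2,c_3,c_4,c_5)$ is noncanonical if and only if $C=(1,2,3,c_4,c_4+1,2c_4)$ and $c_4>4$.
   Context: A system is a tuple $C=(c_1,\dots,c_n)$ of integers with $1=c_1<c_2<\dots<c_n$; for $k\le n$, $(c_1,\dots,c_k)$ is a subsystem. For a positive integer $v$, $\mathrm{opt}_C(v)$ is the minimum of $\sum_i x_i$ over $x\in\mathbb{Z}_{\ge0}^n$ with $\sum_i c_ix_i=v$. The greedy representation of $v$ is produced by: for $i=n$ down to $1$, while $c_i\le$ remaining value, take a coin $c_i$. $\mathrm{grd}_C(v)$ is its number of coins. A positive integer $w$ is a counterexample if $\mathrm{opt}_C(w)<\mathrm{grd}_C(w)$; $C$ is canonical if it has none, noncanonical otherwise. *)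

theory Defs
  imports Main
begin

definition is_system :: "nat list \<Rightarrow> bool" where
  "is_system C \<longleftrightarrow> C \<noteq> [] \<and> C ! 0 = 1 \<and> sorted_wrt (<) C"

fun grd_desc :: "nat list \<Rightarrow> nat \<Rightarrow> nat" where
  "grd_desc [] v = 0"
| "grd_desc (c # cs) v = v div c + grd_desc cs (v mod c)"

definition grd :: "nat list \<Rightarrow> nat \<Rightarrow> nat" where
  "grd C v = grd_desc (rev C) v"

definition opt :: "nat list \<Rightarrow> nat \<Rightarrow> nat" where
  "opt C v = (LEAST k. \<exists>x :: nat list. length x = length C \<and>
       (\<Sum>i<length C. C ! i * x ! i) = v \<and> (\<Sum>i<length C. x ! i) = k)"

definition counterexample :: "nat list \<Rightarrow> nat \<Rightarrow> bool" where
  "counterexample C w \<longleftrightarrow> w > 0 \<and> opt C w < grd C w"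

definition canonical :: "nat list \<Rightarrow> bool" where
  "canonical C \<longleftrightarrow> (\<forall>w. \<not> counterexample C w)"

end

theory Submission
  imports Defs
begin


lemma gd_lt: "v < c \<Longrightarrow> grd_desc (c # cs) v = grd_desc cs v"
  by simp

lemma gd_ge: "0 < c \<Longrightarrow> c \<le> v \<Longrightarrow> grd_desc (c # cs) v = Suc (grd_desc (c # cs) (v - c))"
  by (simp add: le_div_geq le_mod_geq)

lemma gd_zero: "grd_desc L 0 = 0"
  by (induction L) auto

lemma gd_step:
  assumes "\<forall>c\<in>set L. 0 < c" "1 \<in> set L" "0 < v"
  shows "\<exists>c\<in>set L. c \<le> v \<and> grd_desc L v = Suc (grd_desc L (v - c))"
  using assms
proof (induction L)
  case Nil then show ?case by simp
next
  case (Cons c cs)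
  show ?case
  proof (cases "c \<le> v")
    case True
    then show ?thesis using gd_ge[of c v cs] Cons.prems by auto
  next
    case False
    then have "c \<noteq> 1" using Cons.prems by auto
    then have "\<exists>c\<in>set cs. c \<le> v \<and> grd_desc cs v = Suc (grd_desc cs (v - c))"
      using Cons by auto
    then show ?thesis using False by auto
  qed
qed

definition Rep :: "nat list \<Rightarrow> nat \<Rightarrow> nat \<Rightarrow> bool" where
  "Rep C v k \<longleftrightarrow> (\<exists>x :: nat list. length x = length C \<and>
       (\<Sum>i<length C. C ! i * x ! i) = v \<and> (\<Sum>i<length C. x ! i) = k)"

lemma opt_Rep: "opt C v = (LEAST k. Rep C v k)"
  unfolding opt_def Rep_def by simp

lemma sys_pos: "is_system C \<Longrightarrow> c \<in> set C \<Longrightarrow> 0 < c"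
  unfolding is_system_def
  by (metis gr0I in_set_conv_nth not_less_zero sorted_wrt_nth_less zero_less_one)

lemma sys_one: "is_system C \<Longrightarrow> 1 \<in> set C"
  unfolding is_system_def by (metis length_greater_0_conv nth_mem)

lemma sum_upd:
  fixes x :: "nat list" and f :: "nat \<Rightarrow> nat"
  assumes "i < n" "length x = n"
  shows "(\<Sum>j<n. f j * x[i := x ! i + 1] ! j) = f i + (\<Sum>j<n. f j * x ! j)"
proof -
  have "(\<Sum>j<n. f j * x[i := x ! i + 1] ! j) = (\<Sum>j<n. f j * x ! j + (if j = i then f i else 0))"
    using assms by (intro sum.cong) (auto simp: nth_list_update algebra_simps)
  also have "\<dots> = (\<Sum>j<n. f j * x ! j) + f i"
    using assms by (simp add: sum.distrib)
  finally show ?thesis by simp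
qed

lemma Rep_add:
  assumes "Rep C u k" "i < length C"
  shows "Rep C (u + C ! i) (Suc k)"
proof -
  obtain x where x: "length x = length C" "(\<Sum>j<length C. C ! j * x ! j) = u" "(\<Sum>j<length C. x ! j) = k"
    using assms unfolding Rep_def by blast
  let ?y = "x[i := x ! i + 1]"
  have "(\<Sum>j<length C. C ! j * ?y ! j) = C ! i + u"
    using sum_upd[OF assms(2) x(1), of "\<lambda>j. C ! j"] x by simp
  moreover have "(\<Sum>j<length C. ?y ! j) = Suc k"
    using sum_upd[OF assms(2) x(1), of "\<lambda>j. 1"] x by simp
  ultimately show ?thesis unfolding Rep_def using x(1) by (intro exI[of _ ?y]) auto
qed

lemma Rep_self:
  assumes "is_system C"
  shows "Rep C v v"
proof -
  have n: "0 < length C" using assms unfolding is_system_def by auto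
  let ?x = "(replicate (length C) 0)[0 := v]"
  have "(\<Sum>j<length C. C ! j * ?x ! j) = (\<Sum>j<length C. if j = 0 then v else 0)"
    using assms n unfolding is_system_def by (intro sum.cong) (auto simp: nth_list_update)
  moreover have "(\<Sum>j<length C. ?x ! j) = (\<Sum>j<length C. if j = 0 then v else 0)"
    using n by (intro sum.cong) (auto simp: nth_list_update)
  ultimately show ?thesis unfolding Rep_def using n by (intro exI[of _ ?x]) auto
qed

lemma opt_Rep_ex: "is_system C \<Longrightarrow> Rep C v (opt C v)"
  unfolding opt_Rep by (rule LeastI, rule Rep_self)

lemma opt_le_Rep: "Rep C v k \<Longrightarrow> opt C v \<le> k"
  unfolding opt_Rep by (rule Least_le)

lemma opt_zero: "is_system C \<Longrightarrow> opt C 0 = 0"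
  using opt_le_Rep[OF Rep_self[of C 0]] by simp

lemma opt_coin:
  assumes "is_system C" "c \<in> set C" "c \<le> v"
  shows "opt C v \<le> Suc (opt C (v - c))"
proof -
  obtain i where i: "i < length C" "C ! i = c" using assms(2) by (auto simp: in_set_conv_nth)
  have "Rep C (v - c + C ! i) (Suc (opt C (v - c)))"
    by (rule Rep_add[OF opt_Rep_ex[OF assms(1)] i(1)])
  then show ?thesis using i assms(3) by (auto intro: opt_le_Rep)
qed

lemma opt_dec:
  assumes "is_system C" "0 < v"
  shows "\<exists>c\<in>set C. c \<le> v \<and> Suc (opt C (v - c)) \<le> opt C v"
proof -
  obtain x where x: "length x = length C" "(\<Sum>j<length C. C ! j * x ! j) = v" "(\<Sum>j<length C. x ! j) = opt C v"
    using opt_Rep_ex[OF assms(1), of v] unfolding Rep_def by blast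
  obtain i where i: "i < length C" "x ! i > 0"
  proof (rule ccontr)
    assume "\<not> thesis"
    then have "\<forall>i<length C. x ! i = 0" using that by auto
    then have "(\<Sum>j<length C. C ! j * x ! j) = 0" by simp
    then show False using x assms by simp
  qed
  let ?y = "x[i := x ! i - 1]"
  have yl: "length ?y = length C" using x by simp
  have yi: "?y[i := ?y ! i + 1] = x" using i x by (auto simp: list_eq_iff_nth_eq nth_list_update)
  have s1: "(\<Sum>j<length C. C ! j * x ! j) = C ! i + (\<Sum>j<length C. C ! j * ?y ! j)"
    using sum_upd[OF i(1) yl, of "\<lambda>j. C ! j"] yi by simp
  have s2: "(\<Sum>j<length C. x ! j) = Suc (\<Sum>j<length C. ?y ! j)"
    using sum_upd[OF i(1) yl, of "\<lambda>j. 1"] yi by simp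
  have "Rep C (v - C ! i) (opt C v - 1)"
    unfolding Rep_def using yl s1 s2 x by (intro exI[of _ ?y]) auto
  then have "opt C (v - C ! i) \<le> opt C v - 1" by (rule opt_le_Rep)
  moreover have "C ! i \<le> v" using s1 x by simp
  moreover have "opt C v \<ge> 1" using s2 x by simp
  ultimately show ?thesis using i by (intro bexI[of _ "C ! i"]) auto
qed

lemma grd_step:
  assumes "is_system C" "0 < v"
  shows "\<exists>c\<in>set C. c \<le> v \<and> grd C v = Suc (grd C (v - c))"
  using gd_step[of "rev C" v] sys_pos[OF assms(1)] sys_one[OF assms(1)] assms(2)
  unfolding grd_def by auto

lemma opt_le_grd:
  assumes "is_system C"
  shows "opt C v \<le> grd C v"
proof (induction v rule: less_induct)
  case (less v)
  show ?case
  proof (cases "v = 0")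
    case True then show ?thesis using opt_zero[OF assms] by simp
  next
    case False
    then obtain c where c: "c \<in> set C" "c \<le> v" "grd C v = Suc (grd C (v - c))"
      using grd_step[OF assms] by blast
    have "0 < c" using sys_pos[OF assms c(1)] .
    then have "opt C (v - c) \<le> grd C (v - c)" using less False by simp
    then show ?thesis using opt_coin[OF assms c(1) c(2)] c(3) by simp
  qed
qed

lemma canonical_crit:
  assumes "is_system C"
    and step: "\<And>u c. c \<in> set C \<Longrightarrow> grd C (u + c) \<le> Suc (grd C u)"
  shows "canonical C"
proof -
  have "grd C v \<le> opt C v" for v
  proof (induction v rule: less_induct)
    case (less v)
    show ?case
    proof (cases "v = 0")
      case True then show ?thesis by (simp add: grd_def gd_zero)
    next
      case False
      then obtain c where c: "c \<in> set C" "c \<le> v" "Suc (opt C (v - c)) \<le> opt C v"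
        using opt_dec[OF assms(1)] by blast
      have "0 < c" using sys_pos[OF assms(1) c(1)] .
      then have "grd C (v - c) \<le> opt C (v - c)" using less False by simp
      moreover have "grd C v \<le> Suc (grd C (v - c))" using step[OF c(1), of "v - c"] c(2) by simp
      ultimately show ?thesis using c(3) by simp
    qed
  qed
  then show ?thesis unfolding canonical_def counterexample_def by (simp add: not_less)
qed



lemma gd321: "grd_desc [3,2,1] x = (x + 2) div 3"
proof (induction x rule: less_induct)
  case (less x)
  show ?case
  proof (cases "x < 3")
    case True
    then have "x = 0 \<or> x = 1 \<or> x = 2" by auto
    then show ?thesis by auto
  next
    case False
    then have "grd_desc [3,2,1] x = Suc (grd_desc [3,2,1] (x - 3))" by (intro gd_ge) auto
    also have "\<dots> = Suc ((x - 3 + 2) div 3)" using less False by simp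
    also have "\<dots> = (x + 2) div 3" using False by (simp add: le_div_geq)
    finally show ?thesis .
  qed
qed

definition hh :: "nat \<Rightarrow> nat \<Rightarrow> nat" where
  "hh m v = (if v < m then (v + 2) div 3 else if v = m then 1 else Suc ((v - m + 1) div 3))"

lemma G_small:
  assumes "4 < m" "v < 2 * m"
  shows "grd [1,2,3,m,m+1,2*m] v = hh m v"
proof -
  have "grd [1,2,3,m,m+1,2*m] v = grd_desc [m+1, m, 3, 2, 1] v"
    using assms by (simp add: grd_def)
  also have "\<dots> = hh m v"
  proof (cases "v < m")
    case True
    have "grd_desc [m+1, m, 3, 2, 1] v = grd_desc [m, 3, 2, 1] v" by (rule gd_lt) (use True in simp)
    also have "\<dots> = grd_desc [3, 2, 1] v" by (rule gd_lt) (use True in simp)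
    finally show ?thesis using True by (simp only: gd321 hh_def if_True)
  next
    case False
    show ?thesis
    proof (cases "v = m")
      case True then show ?thesis using assms by (simp add: hh_def)
    next
      case ne: False
      then have "grd_desc [m+1, m, 3, 2, 1] v = Suc (grd_desc [m+1, m, 3, 2, 1] (v - (m+1)))"
        using False by (intro gd_ge) auto
      also have "grd_desc [m+1, m, 3, 2, 1] (v - (m+1)) = grd_desc [m, 3, 2, 1] (v - (m+1))"
        by (rule gd_lt) (use assms in simp)
      also have "\<dots> = grd_desc [3, 2, 1] (v - (m+1))"
        by (rule gd_lt) (use assms in simp)
      finally show ?thesis using False ne gd321[of "v - (m+1)"] by (simp add: hh_def del: grd_desc.simps(2))
    qed
  qed
  finally show ?thesis .
qed

lemma G_big:
  assumes "4 < m" "2 * m \<le> v"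
  shows "grd [1,2,3,m,m+1,2*m] v = Suc (grd [1,2,3,m,m+1,2*m] (v - 2 * m))"
  using assms gd_ge[of "2*m" v] by (simp add: grd_def del: grd_desc.simps(2))

lemma P1: "4 < m \<Longrightarrow> c \<in> {1,2,3,m,m+1} \<Longrightarrow> u + c < 2 * m \<Longrightarrow> hh m (u + c) \<le> Suc (hh m u)"
  unfolding hh_def by (auto split: if_splits)

lemma P2: "4 < m \<Longrightarrow> c \<in> {1,2,3,m,m+1} \<Longrightarrow> u < 2*m \<Longrightarrow> 2 * m \<le> u + c \<Longrightarrow> hh m (u + c - 2 * m) \<le> hh m u"
  unfolding hh_def by (auto split: if_splits)

lemma canon_fam:
  assumes "4 < m"
  shows "canonical [1,2,3,m,m+1,2*m]"
proof (rule canonical_crit)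
  show "is_system [1,2,3,m,m+1,2*m]" using assms by (simp add: is_system_def)
next
  fix u c assume c: "c \<in> set [1,2,3,m,m+1,2*m]"
  let ?G = "grd [1,2,3,m,m+1,2*m]"
  show "?G (u + c) \<le> Suc (?G u)"
  proof (cases "c = 2 * m")
    case True then show ?thesis using G_big[OF assms, of "u + c"] by simp
  next
    case False
    then have c5: "c \<in> {1,2,3,m,m+1}" using c by auto
    then have cle: "c \<le> m + 1" using assms by auto
    show ?thesis
    proof (induction u rule: less_induct)
      case (less u)
      show ?case
      proof (cases "2 * m \<le> u")
        case True
        have "?G (u + c) = Suc (?G (u - 2*m + c))" using G_big[OF assms, of "u + c"] True by simp
        also have "\<dots> \<le> Suc (Suc (?G (u - 2*m)))" using less[of "u - 2*m"] assms True by simp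
        also have "\<dots> = Suc (?G u)" using G_big[OF assms, of u] True by simp
        finally show ?thesis .
      next
        case False
        show ?thesis
        proof (cases "u + c < 2 * m")
          case True then show ?thesis using G_small[OF assms] False P1[OF assms c5] by simp
        next
          case F2: False
          have "?G (u + c) = Suc (?G (u + c - 2 * m))" using G_big[OF assms, of "u + c"] F2 by simp
          also have "\<dots> = Suc (hh m (u + c - 2*m))" using G_small[OF assms] F2 False cle by simp
          also have "\<dots> \<le> Suc (hh m u)" using P2[OF assms c5] False F2 by simp
          finally show ?thesis using G_small[OF assms] False by simp
        qed
      qed
    qed
  qed
qed



lemma L2: "a < b \<Longrightarrow> b < c \<Longrightarrow> c < d \<Longrightarrow> v < b \<Longrightarrow> grd_desc [d,c,b,a,1] v = grd_desc [a,1] v"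
  by (simp add: gd_lt del: grd_desc.simps)
lemma L1: "a < b \<Longrightarrow> b < c \<Longrightarrow> c < d \<Longrightarrow> v < a \<Longrightarrow> grd_desc [d,c,b,a,1] v = v"
  by simp
lemma L3: "0 < b \<Longrightarrow> b < c \<Longrightarrow> c < d \<Longrightarrow> b \<le> v \<Longrightarrow> v < c \<Longrightarrow> grd_desc [d,c,b,a,1] v = Suc (grd_desc [d,c,b,a,1] (v - b))"
proof -
  assume h: "0 < b" "b < c" "c < d" "b \<le> v" "v < c"
  have "grd_desc [d,c,b,a,1] v = grd_desc [b,a,1] v" using h by simp
  also have "\<dots> = Suc (grd_desc [b,a,1] (v - b))" using h by (intro gd_ge) auto
  also have "grd_desc [b,a,1] (v - b) = grd_desc [d,c,b,a,1] (v - b)" using h by simp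
  finally show ?thesis .
qed
lemma L4: "0 < c \<Longrightarrow> c < d \<Longrightarrow> c \<le> v \<Longrightarrow> v < d \<Longrightarrow> grd_desc [d,c,b,a,1] v = Suc (grd_desc [d,c,b,a,1] (v - c))"
proof -
  assume h: "0 < c" "c < d" "c \<le> v" "v < d"
  have "grd_desc [d,c,b,a,1] v = grd_desc [c,b,a,1] v" using h by simp
  also have "\<dots> = Suc (grd_desc [c,b,a,1] (v - c))" using h by (intro gd_ge) auto
  also have "grd_desc [c,b,a,1] (v - c) = grd_desc [d,c,b,a,1] (v - c)" using h by simp
  finally show ?thesis .
qed
lemma L5: "0 < d \<Longrightarrow> d \<le> v \<Longrightarrow> grd_desc [d,c,b,a,1] v = Suc (grd_desc [d,c,b,a,1] (v - d))"
  by (rule gd_ge)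
lemma L6: "0 < a \<Longrightarrow> a \<le> v \<Longrightarrow> grd_desc [a,1] v = Suc (grd_desc [a,1] (v - a))"
  by (rule gd_ge)
lemma L7: "v < a \<Longrightarrow> grd_desc [a,1] v = v"
  by simp
lemma E1: "v < e \<Longrightarrow> grd_desc [e,d,c,b,a,1] v = grd_desc [d,c,b,a,1] v"
  by (rule gd_lt)
lemma E2: "0 < e \<Longrightarrow> e \<le> v \<Longrightarrow> grd_desc [e,d,c,b,a,1] v = Suc (grd_desc [e,d,c,b,a,1] (v - e))"
  by (rule gd_ge)

lemma gd_pos: "\<forall>c\<in>set L. 0 < c \<Longrightarrow> 1 \<in> set L \<Longrightarrow> 0 < v \<Longrightarrow> 0 < grd_desc L v"
  using gd_step[of L v] by auto

lemma gd_pos5: "0 < a \<Longrightarrow> a < b \<Longrightarrow> b < c \<Longrightarrow> c < d \<Longrightarrow> 0 < v \<Longrightarrow> 0 < grd_desc [d,c,b,a,1] v"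
  by (rule gd_pos) auto

lemma gd_pos2: "0 < a \<Longrightarrow> 0 < v \<Longrightarrow> 0 < grd_desc [a,1] v"
  by (rule gd_pos) auto

lemma opt_two:
  assumes "is_system C" "x \<in> set C" "y \<in> set C"
  shows "opt C (x + y) \<le> 2"
proof -
  have "opt C (x + y) \<le> Suc (opt C (x + y - y))" using opt_coin[OF assms(1) assms(3), of "x + y"] by simp
  also have "opt C (x + y - y) \<le> Suc (opt C (x - x))" using opt_coin[OF assms(1) assms(2), of x] by simp
  finally show ?thesis using opt_zero[OF assms(1)] by simp
qed

lemma opt_sub:
  assumes "is_system A" "is_system C" "set A \<subseteq> set C"
  shows "opt C v \<le> opt A v"
proof (induction v rule: less_induct)
  case (less v)
  show ?case
  proof (cases "v = 0")
    case True then show ?thesis using opt_zero[OF assms(2)] by simp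
  next
    case False
    then obtain c where c: "c \<in> set A" "c \<le> v" "Suc (opt A (v - c)) \<le> opt A v"
      using opt_dec[OF assms(1)] by blast
    have "0 < c" using sys_pos[OF assms(1) c(1)] .
    then have "opt C (v - c) \<le> opt A (v - c)" using less False by simp
    moreover have "opt C v \<le> Suc (opt C (v - c))" using opt_coin[OF assms(2)] c assms(3) by auto
    ultimately show ?thesis using c(3) by simp
  qed
qed

lemma opt_sub2:
  assumes "is_system A" "is_system C" "\<forall>c\<in>set C. c \<le> v \<longrightarrow> c \<in> set A"
  shows "opt A v \<le> opt C v"
  using assms(3)
proof (induction v rule: less_induct)
  case (less v)
  show ?case
  proof (cases "v = 0")
    case True then show ?thesis using opt_zero[OF assms(1)] by simp
  next
    case False
    then obtain c where c: "c \<in> set C" "c \<le> v" "Suc (opt C (v - c)) \<le> opt C v"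
      using opt_dec[OF assms(2)] by blast
    have "0 < c" using sys_pos[OF assms(2) c(1)] .
    then have "opt A (v - c) \<le> opt C (v - c)" using less False by auto
    moreover have "opt A v \<le> Suc (opt A (v - c))" using opt_coin[OF assms(1)] c less.prems by auto
    ultimately show ?thesis using c(3) by simp
  qed
qed

lemma KZ:
  assumes sys: "is_system (B @ [d])"
    and cex: "opt (B @ [d]) w < grd (B @ [d]) w"
    and minl: "\<forall>v<w. grd (B @ [d]) v \<le> opt (B @ [d]) v"
    and w: "0 < w"
  shows "\<exists>ci\<in>set B. ci \<le> w \<and> w - ci < d \<and> Suc (grd (B @ [d]) (w - ci)) \<le> opt (B @ [d]) w"
proof -
  let ?A = "B @ [d]"
  have gA: "grd ?A v = grd_desc (d # rev B) v" for v by (simp add: grd_def)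
  have dpos: "0 < d" using sys_pos[OF sys] by simp
  have gd: "d \<le> v \<Longrightarrow> grd ?A v = Suc (grd ?A (v - d))" for v using gd_ge[OF dpos] gA by simp
  obtain ci where ci: "ci \<in> set ?A" "ci \<le> w" "Suc (opt ?A (w - ci)) \<le> opt ?A w"
    using opt_dec[OF sys w] by blast
  have cpos: "0 < ci" using sys_pos[OF sys ci(1)] .
  have g1: "Suc (grd ?A (w - ci)) \<le> opt ?A w" using minl cpos ci w
    by (metis Suc_le_mono diff_less le_trans)
  have nd: "ci \<noteq> d"
  proof
    assume "ci = d"
    then have "grd ?A w = Suc (grd ?A (w - ci))" using gd ci by simp
    then show False using g1 cex by simp
  qed
  have lt: "w - ci < d"
  proof (rule ccontr)
    assume "\<not> w - ci < d"
    then have ge: "d \<le> w - ci" by simp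
    have "grd ?A (w - ci) = Suc (grd ?A (w - ci - d))" using gd ge by simp
    moreover have "opt ?A (w - d) \<le> Suc (opt ?A (w - d - ci))" using opt_coin[OF sys ci(1), of "w - d"] ge ci(2) by (simp add: diff_diff_add le_diff_conv2 add.commute)
    moreover have "opt ?A (w - d - ci) \<le> grd ?A (w - d - ci)" by (rule opt_le_grd[OF sys])
    moreover have "grd ?A (w - d) \<le> opt ?A (w - d)" using minl dpos ge by simp
    moreover have "grd ?A w = Suc (grd ?A (w - d))" using gd ge by simp
    moreover have "w - d - ci = w - ci - d" by simp
    ultimately have "grd ?A w \<le> opt ?A w" using g1 by simp
    then show False using cex by simp
  qed
  show ?thesis using ci nd lt g1 by auto
qed



declare grd_desc.simps(2)[simp del]

theorem corollary4:
  fixes c2 c3 c4 c5 :: nat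
  assumes "is_system [1, c2, c3, c4, c5, 2 * c5 - c2]"
  shows "(canonical [1, c2, c3, c4, c5, 2 * c5 - c2] \<and> \<not> canonical [1, c2, c3, c4, c5])
     \<longleftrightarrow> ([1, c2, c3, c4, c5, 2 * c5 - c2] = [1, 2, 3, c4, c4 + 1, 2 * c4] \<and> c4 > 4)"
proof -
  define a where "a = c2"
  define b where "b = c3"
  define c where "c = c4"
  define d where "d = c5"
  define e where "e = 2 * c5 - c2"
  have ine: "1 < a" "a < b" "b < c" "c < d" "d < e"
    using assms unfolding a_def b_def c_def d_def e_def by (auto simp: is_system_def)
  have eq: "e = 2 * d - a" unfolding e_def d_def a_def by simp
  let ?A = "[1,a,b,c,d]"
  let ?C = "[1,a,b,c,d,e]"
  have sysC: "is_system ?C" using ine by (simp add: is_system_def)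
  have sysA: "is_system ?A" using ine by (simp add: is_system_def)
  have gA: "grd ?A v = grd_desc [d,c,b,a,1] v" for v by (simp add: grd_def)
  have gC: "grd ?C v = grd_desc [e,d,c,b,a,1] v" for v by (simp add: grd_def)
  have gCA: "v < e \<Longrightarrow> grd ?C v = grd ?A v" for v using gA gC E1 by simp
  have oCA: "opt ?C v \<le> opt ?A v" for v by (rule opt_sub[OF sysA sysC]) auto
  have oAC: "v < e \<Longrightarrow> opt ?A v \<le> opt ?C v" for v by (rule opt_sub2[OF sysA sysC]) auto
  have "(canonical ?C \<and> \<not> canonical ?A) \<longleftrightarrow> (?C = [1, 2, 3, c, c + 1, 2 * c] \<and> c > 4)"
  proof
    assume L: "canonical ?C \<and> \<not> canonical ?A"
    have canC: "0 < v \<Longrightarrow> grd ?C v \<le> opt ?C v" for v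
      using conjunct1[OF L] unfolding canonical_def counterexample_def by (meson not_less)
    have "\<exists>w. counterexample ?A w" using L unfolding canonical_def by auto
    then obtain w where w: "counterexample ?A w" and wmin: "\<And>v. v < w \<Longrightarrow> \<not> counterexample ?A v"
      using exists_least_iff[of "counterexample ?A"] by blast
    have w0: "0 < w" and cex: "opt ?A w < grd ?A w" using w unfolding counterexample_def by auto
    have minl: "\<forall>v<w. grd ?A v \<le> opt ?A v"
    proof (intro allI impI)
      fix v assume "v < w"
      then show "grd ?A v \<le> opt ?A v"
        using wmin[of v] unfolding counterexample_def by (cases "v = 0") (auto simp: grd_def gd_zero)
    qed
    have we: "e \<le> w"
    proof (rule ccontr)
      assume "\<not> e \<le> w"
      then have "w < e" by simp
      then have "opt ?C w < grd ?C w" using cex gCA oCA[of w] oAC[of w] by simp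
      then show False using canC[OF w0] by simp
    qed
    have app: "[1,a,b,c] @ [d] = ?A" by simp
    have kz: "\<exists>ci\<in>set [1,a,b,c]. ci \<le> w \<and> w - ci < d \<and> Suc (grd ?A (w - ci)) \<le> opt ?A w"
      using KZ[of "[1,a,b,c]" d w] unfolding app using sysA cex minl w0 by blast
    obtain ci where ci: "ci \<in> set [1,a,b,c]" "ci \<le> w" "w - ci < d" "Suc (grd ?A (w - ci)) \<le> opt ?A w"
      using kz by blast
    have cic: "ci \<le> c" using ci(1) ine by auto
    have wcd: "w < c + d" using ci cic by simp
    have dca: "d < c + a" using we wcd eq by simp
    have "grd ?C (c + d) = Suc (grd_desc [e,d,c,b,a,1] (c + d - e))"
      using gC E2[of e "c + d"] ine we wcd by simp
    also have "grd_desc [e,d,c,b,a,1] (c + d - e) = c + d - e"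
      using E1[of "c + d - e" e] L1[of a b c d "c + d - e"] ine eq dca by simp
    finally have g1: "grd ?C (c + d) = Suc (c + d - e)" .
    have "opt ?C (c + d) \<le> 2" by (rule opt_two[OF sysC]) auto
    then have "Suc (c + d - e) \<le> 2" using g1 canC[of "c + d"] ine by simp
    then have dd: "d = c + a - 1" using eq dca ine by simp
    have wee: "w = e" using we wcd dd eq ine by arith
    have cic2: "ci = c" using ci(3) cic wee dd eq by simp
    have ec: "e - c = c + a - 2" using eq dd ine by arith
    have "grd ?A (e - c) = grd_desc [d,c,b,a,1] (c + a - 2)" unfolding ec by (rule gA)
    also have "\<dots> = Suc (grd_desc [d,c,b,a,1] (c + a - 2 - c))"
      using L4[of c d "c + a - 2" b a] ine dd by simp
    also have "grd_desc [d,c,b,a,1] (c + a - 2 - c) = a - 2"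
      using L1[of a b c d "a - 2"] ine by simp
    finally have oe: "a \<le> opt ?A e" using ci(4) cic2 wee ine by simp
    have ed: "e - d = c - 1" using eq dd ine by arith
    have "grd ?A e = Suc (grd_desc [d,c,b,a,1] (e - d))"
      using gA L5[of d e c b a] ine by simp
    then have "grd ?A e = Suc (grd_desc [d,c,b,a,1] (c - 1))" unfolding ed .
    then have gc1: "a \<le> grd_desc [d,c,b,a,1] (c - 1)" using oe cex wee by simp
    have "grd ?C (c + b) = grd ?A (c + b)" using gCA ine eq dd by simp
    also have "\<dots> = Suc (grd_desc [d,c,b,a,1] (c + b - d))"
      using gA L5[of d "c + b" c b a] ine dd by simp
    also have "grd_desc [d,c,b,a,1] (c + b - d) = grd_desc [a,1] (b + 1 - a)"
      using L2[of a b c d "c + b - d"] ine dd by simp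
    finally have g2: "grd ?C (c + b) = Suc (grd_desc [a,1] (b + 1 - a))" .
    have "opt ?C (c + b) \<le> 2" by (rule opt_two[OF sysC]) auto
    then have g2': "grd_desc [a,1] (b + 1 - a) \<le> 1" using g2 canC[of "c + b"] ine by simp
    have bb: "b + 1 = 2 * a"
    proof (cases "b + 1 - a < a")
      case True then show ?thesis using g2' L7[of "b + 1 - a" a] ine by simp
    next
      case False
      then have "grd_desc [a,1] (b + 1 - a) = Suc (grd_desc [a,1] (b + 1 - a - a))"
        using L6[of a "b + 1 - a"] ine by simp
      then have z: "grd_desc [a,1] (b + 1 - a - a) = 0" using g2' by simp
      show ?thesis
      proof (rule ccontr)
        assume "b + 1 \<noteq> 2 * a"
        then have "0 < b + 1 - a - a" using False by simp
        then show False using gd_pos2[of a "b + 1 - a - a"] z ine by simp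
      qed
    qed
    have a2: "a = 2"
    proof (rule ccontr)
      assume "a \<noteq> 2"
      then have a3: "3 \<le> a" using ine by simp
      have "grd ?C (2 * c) = grd ?A (2 * c)" using gCA ine eq dd a3 by simp
      also have "\<dots> = Suc (grd_desc [d,c,b,a,1] (2 * c - d))"
        using gA L5[of d "2 * c" c b a] ine dd by simp
      finally have g3: "grd ?C (2 * c) = Suc (grd_desc [d,c,b,a,1] (2 * c - d))" .
      have "opt ?C (2 * c) \<le> 2" using opt_two[OF sysC, of c c] by (simp add: mult_2)
      then have g3': "grd_desc [d,c,b,a,1] (2 * c - d) \<le> 1" using g3 canC[of "2 * c"] ine by simp
      have cv: "2 * c - d = c + 1 - a" using dd ine by simp
      have c3: "c = a + b - 1"
      proof (cases "c + 1 - a < b")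
        case True
        have "grd_desc [d,c,b,a,1] (c + 1 - a) = grd_desc [a,1] (c + 1 - a)"
          using L2[of a b c d "c + 1 - a"] ine True by simp
        also have "\<dots> = Suc (grd_desc [a,1] (c + 1 - a - a))"
          using L6[of a "c + 1 - a"] ine bb by simp
        finally have "grd_desc [a,1] (c + 1 - a - a) = 0" using g3' cv by simp
        moreover have "0 < c + 1 - a - a" using ine bb by simp
        ultimately show ?thesis
          using gd_pos2[of a "c + 1 - a - a"] ine by simp
      next
        case False
        have "grd_desc [d,c,b,a,1] (c + 1 - a) = Suc (grd_desc [d,c,b,a,1] (c + 1 - a - b))"
          using L3[of b c d "c + 1 - a" a] ine False by simp
        then have z: "grd_desc [d,c,b,a,1] (c + 1 - a - b) = 0" using g3' cv by simp
        show ?thesis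
        proof (rule ccontr)
          assume "c \<noteq> a + b - 1"
          then have "0 < c + 1 - a - b" using False ine by arith
          then show False using gd_pos5[of a b c d "c + 1 - a - b"] ine z by simp
        qed
      qed
      have c1b: "c - 1 - b = a - 2" "b \<le> c - 1" using c3 bb ine by arith+
      have "grd_desc [d,c,b,a,1] (c - 1) = Suc (grd_desc [d,c,b,a,1] (c - 1 - b))"
        using L3[of b c d "c - 1" a] ine c1b by simp
      also have "grd_desc [d,c,b,a,1] (c - 1 - b) = a - 2"
        unfolding c1b(1) using L1[of a b c d "a - 2"] ine by simp
      finally show False using gc1 a3 by simp
    qed
    have b3: "b = 3" using bb a2 by simp
    have c5: "4 < c"
    proof (rule ccontr)
      assume "\<not> 4 < c"
      then have "c = 4" using ine b3 by simp
      then show False using gc1 a2 b3 dd by (simp add: grd_desc.simps)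
    qed
    show "?C = [1, 2, 3, c, c + 1, 2 * c] \<and> c > 4" using a2 b3 dd eq c5 by simp
  next
    assume R: "?C = [1, 2, 3, c, c + 1, 2 * c] \<and> c > 4"
    then have a2: "a = 2" and b3: "b = 3" and dd: "d = c + 1" and ee: "e = 2 * c" and c5: "4 < c" by auto
    have cC: "canonical ?C" using canon_fam[OF c5] a2 b3 dd ee by simp
    have "opt ?A (c + c) \<le> 2" by (rule opt_two[OF sysA]) auto
    moreover have "grd ?A (c + c) = Suc (grd_desc [d,c,b,a,1] (c + c - d))"
      using gA L5[of d "c + c" c b a] ine dd by simp
    moreover have "grd_desc [d,c,b,a,1] (c + c - d) = Suc (grd_desc [d,c,b,a,1] (c + c - d - b))"
      using L3[of b c d "c + c - d" a] ine dd c5 b3 by simp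
    moreover have "0 < c + c - d - b" using dd b3 c5 by simp
    ultimately have "opt ?A (c + c) < grd ?A (c + c)"
      using gd_pos5[of a b c d "c + c - d - b"] ine by simp
    then have "\<not> canonical ?A" unfolding canonical_def counterexample_def using c5
      by (metis add_pos_pos gr0I not_less_zero)
    then show "canonical ?C \<and> \<not> canonical ?A" using cC by simp
  qed
  then show ?thesis unfolding a_def b_def c_def d_def e_def by simp
qed


end
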